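(* Let $\delta\ge 0$ and let $Z_\delta(t)$ be the total discounted IBNR claims defined in the context, with claims arriving according to a renewal process with renewal function $m$. Then for every $t>0$, $$\mathbb{E}[Z_\delta(t)]=\mu_1 e^{-\delta t}\int_0^t \mathcal{T}_\delta w(t-x)\,\mathrm{d}m(x).$$ In particular, for $\delta=0$, $\mathbb{E}[Z(t)]=\mu_1\int_0^t \overline{W}(t-x)\,\mathrm{d}m(x)$.
   Context: Let $\{\tau_i\}_{i\ge1}$ be i.i.d. positive interarrival times with cdf $F$ and pdf $f=F'$; set $T_0:=0$, $T_n:=\sum_{i=1}^n\tau_i$, and $N(t):=\max\{i\ge 0: T_i\le t\}$ (a renewal process), with renewal function $m(t):=\mathbb{E}[N(t)]=\sum_{i\ge1}F^{*(i)}(t)$. Let $\{X_i\}_{i\ge1}$ be i.i.d. claim amounts with generic copy $X$ and $\mu_k:=\mathbb{E}[X^k]$, $\mu_0:=1$. Let $\{L_i\}_{i\ge1}$ be i.i.d. reporting delays with cdf $W$, survival function $\overline W=1-W$ and pdf $w=W'$. The three sequences $\{\tau_i\}$, $\{X_i\}$, $\{L_i\}$ are mutually independent. For a force of interest $\delta\ge0$, $Z_\delta(t):=\sum_{i=1}^{\infty}e^{-\delta(T_i+L_i)}\mathbf{1}_{\{T_i\le t<T_i+L_i\}}X_i$ and $Z(t):=Z_0(t)$. The Dickson–Hipp operator is $\mathcal{T}_u g(v):=\int_v^\infty e^{-u(y-v)}g(y)\,\mathrm{d}y$ for $u,v\ge0$. *)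

theory Defs
  imports "HOL-Probability.Probability"
begin

text \<open>Arrival epochs T_n = tau_1 + ... + tau_n (T_0 = 0); sequences are indexed from 1.\<close>
definition arrival :: "(nat \<Rightarrow> 'a \<Rightarrow> real) \<Rightarrow> nat \<Rightarrow> 'a \<Rightarrow> real" where
  "arrival tau n \<omega> = (\<Sum>i\<in>{1..n}. tau i \<omega>)"

definition IBNR_disc ::
  "(nat \<Rightarrow> 'a \<Rightarrow> real) \<Rightarrow> (nat \<Rightarrow> 'a \<Rightarrow> real) \<Rightarrow> (nat \<Rightarrow> 'a \<Rightarrow> real)
     \<Rightarrow> real \<Rightarrow> real \<Rightarrow> 'a \<Rightarrow> real" where
  "IBNR_disc tau X L \<delta> t \<omega> =
     (\<Sum>j. (let i = Suc j in
        exp (- \<delta> * (arrival tau i \<omega> + L i \<omega>)) *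
        (if arrival tau i \<omega> \<le> t \<and> t < arrival tau i \<omega> + L i \<omega> then 1 else 0) * X i \<omega>))"

fun cdf_conv_pow :: "(real \<Rightarrow> real) \<Rightarrow> nat \<Rightarrow> real \<Rightarrow> real" where
  "cdf_conv_pow F 0 t = (if 0 \<le> t then 1 else 0)"
| "cdf_conv_pow F (Suc n) t = (LINT y|interval_measure F. cdf_conv_pow F n (t - y))"

definition renewal_fun :: "(real \<Rightarrow> real) \<Rightarrow> real \<Rightarrow> real" where
  "renewal_fun F t = (\<Sum>n. cdf_conv_pow F (Suc n) t)"

definition dickson_hipp :: "real \<Rightarrow> (real \<Rightarrow> real) \<Rightarrow> real \<Rightarrow> real" where
  "dickson_hipp u g v = (LINT y:{v..}|lborel. exp (- u * (y - v)) * g y)"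

end

theory Submission
  imports Defs
begin


locale ibnr = prob_space M
  for M :: "'a measure" +
  fixes tau X L :: "nat \<Rightarrow> 'a \<Rightarrow> real"
    and F W w :: "real \<Rightarrow> real"
  assumes indep: "indep_vars (\<lambda>_. borel)
          (\<lambda>(k::nat, i). if k = 0 then tau i else if k = 1 then X i else L i)
          ({0, 1, 2} \<times> {1..})"
    and tau_id: "\<And>i. i \<ge> 1 \<Longrightarrow> distr M borel (tau i) = distr M borel (tau 1)"
    and X_id: "\<And>i. i \<ge> 1 \<Longrightarrow> distr M borel (X i) = distr M borel (X 1)"
    and L_id: "\<And>i. i \<ge> 1 \<Longrightarrow> distr M borel (L i) = distr M borel (L 1)"
    and tau_pos: "\<And>i. i \<ge> 1 \<Longrightarrow> AE \<omega> in M. tau i \<omega> > 0"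
    and F_def: "\<And>x. F x = measure M {\<omega> \<in> space M. tau 1 \<omega> \<le> x}"
    and W_def: "\<And>x. W x = measure M {\<omega> \<in> space M. L 1 \<omega> \<le> x}"
    and w_nonneg: "\<And>x. 0 \<le> w x"
    and w_pdf: "distributed M lborel (L 1) (\<lambda>x. ennreal (w x))"
    and X_int: "integrable M (X 1)"
begin

definition Y :: "nat \<times> nat \<Rightarrow> 'a \<Rightarrow> real" where
  "Y = (\<lambda>(k::nat, i). if k = 0 then tau i else if k = 1 then X i else L i)"

definition II :: "(nat \<times> nat) set" where "II = {0, 1, 2} \<times> {1..}"

lemma indepY: "indep_vars (\<lambda>_. borel) Y II"
  using indep unfolding Y_def II_def .

lemma rvY: "p \<in> II \<Longrightarrow> Y p \<in> borel_measurable M"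
  using indepY unfolding indep_vars_def by auto

lemma tau_meas[measurable]: "i \<ge> 1 \<Longrightarrow> tau i \<in> borel_measurable M"
  using rvY[of "(0,i)"] by (simp add: Y_def II_def)
lemma X_meas[measurable]: "i \<ge> 1 \<Longrightarrow> X i \<in> borel_measurable M"
  using rvY[of "(1,i)"] by (simp add: Y_def II_def)
lemma L_meas[measurable]: "i \<ge> 1 \<Longrightarrow> L i \<in> borel_measurable M"
  using rvY[of "(2,i)"] by (simp add: Y_def II_def)

abbreviation T where "T \<equiv> arrival tau"

lemma T_meas[measurable]: "T n \<in> borel_measurable M"
  unfolding arrival_def by measurable

lemma T_Suc: "T (Suc n) \<omega> = T n \<omega> + tau (Suc n) \<omega>"
  unfolding arrival_def by simp

lemma T_0: "T 0 \<omega> = 0"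
  unfolding arrival_def by simp

lemma F_cdf: "F = cdf (distr M borel (tau 1))"
proof
  fix x show "F x = cdf (distr M borel (tau 1)) x"
    unfolding F_def cdf_def by (subst measure_distr) (auto intro!: arg_cong[where f="measure M"])
qed

lemma distr_tau: "i \<ge> 1 \<Longrightarrow> distr M borel (tau i) = interval_measure F"
proof -
  assume i: "i \<ge> 1"
  interpret D: real_distribution "distr M borel (tau 1)" by simp
  have "interval_measure F = distr M borel (tau 1)"
    unfolding F_cdf
    apply (rule cdf_unique)
      apply (rule real_distribution_interval_measure)
    using D.cdf_nondecreasing D.cdf_is_right_cont D.cdf_lim_at_bot D.cdf_lim_at_top_prob
    by (auto simp: cdf_interval_measure)
  with tau_id[OF i] show ?thesis by simp
qed

lemma indep_groups:
  assumes "A \<subseteq> II" "B \<subseteq> II" "A \<inter> B = {}"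
    and g1: "g1 \<in> measurable (PiM A (\<lambda>_. borel)) S"
    and g2: "g2 \<in> measurable (PiM B (\<lambda>_. borel)) S'"
  shows "indep_var S (\<lambda>\<omega>. g1 (restrict (\<lambda>p. Y p \<omega>) A)) S' (\<lambda>\<omega>. g2 (restrict (\<lambda>p. Y p \<omega>) B))"
  using indep_var_compose[OF indep_var_restrict[OF indepY] g1 g2] assms
  by (simp add: comp_def Int_commute)

lemma indep_T_tau: "indep_var borel (T n) borel (tau (Suc n))"
proof -
  have "indep_var borel (\<lambda>\<omega>. (\<lambda>f. \<Sum>j\<in>{1..n}. f (0,j)) (restrict (\<lambda>p. Y p \<omega>) ({0}\<times>{1..n})))
     borel (\<lambda>\<omega>. (\<lambda>f. f (0, Suc n)) (restrict (\<lambda>p. Y p \<omega>) {(0, Suc n)}))"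
    by (rule indep_groups) (auto simp: II_def)
  moreover have "(\<lambda>\<omega>. (\<lambda>f. \<Sum>j\<in>{1..n}. f (0,j)) (restrict (\<lambda>p. Y p \<omega>) ({0}\<times>{1..n}))) = T n"
    by (auto simp: arrival_def Y_def intro!: sum.cong)
  moreover have "(\<lambda>\<omega>. (\<lambda>f. f (0, Suc n)) (restrict (\<lambda>p. Y p \<omega>) {(0, Suc n)})) = tau (Suc n)"
    by (auto simp: Y_def)
  ultimately show ?thesis by simp
qed

lemma indep_TL_X: assumes "i \<ge> 1" and h[measurable]: "h \<in> borel_measurable (borel \<Otimes>\<^sub>M borel)"
  shows "indep_var borel (\<lambda>\<omega>. h (T i \<omega>, L i \<omega>)) borel (X i)"
proof -
  have "indep_var borel (\<lambda>\<omega>. (\<lambda>f. h (\<Sum>j\<in>{1..i}. f (0,j), f (2,i))) (restrict (\<lambda>p. Y p \<omega>) ({0}\<times>{1..i} \<union> {(2,i)})))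
     borel (\<lambda>\<omega>. (\<lambda>f. f (1, i)) (restrict (\<lambda>p. Y p \<omega>) {(1, i)}))"
    using assms by (intro indep_groups) (auto simp: II_def)
  moreover have "(\<lambda>\<omega>. (\<lambda>f. h (\<Sum>j\<in>{1..i}. f (0,j), f (2,i))) (restrict (\<lambda>p. Y p \<omega>) ({0}\<times>{1..i} \<union> {(2,i)}))) = (\<lambda>\<omega>. h (T i \<omega>, L i \<omega>))"
    by (auto simp: arrival_def Y_def intro!: sum.cong arg_cong[where f=h])
  moreover have "(\<lambda>\<omega>. (\<lambda>f. f (1, i)) (restrict (\<lambda>p. Y p \<omega>) {(1, i)})) = X i"
    by (auto simp: Y_def)
  ultimately show ?thesis by simp
qed

lemma indep_T_L: assumes "i \<ge> 1"
  shows "indep_var borel (T i) borel (L i)"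
proof -
  have "indep_var borel (\<lambda>\<omega>. (\<lambda>f. \<Sum>j\<in>{1..i}. f (0,j)) (restrict (\<lambda>p. Y p \<omega>) ({0}\<times>{1..i})))
     borel (\<lambda>\<omega>. (\<lambda>f. f (2, i)) (restrict (\<lambda>p. Y p \<omega>) {(2, i)}))"
    using assms by (intro indep_groups) (auto simp: II_def)
  moreover have "(\<lambda>\<omega>. (\<lambda>f. \<Sum>j\<in>{1..i}. f (0,j)) (restrict (\<lambda>p. Y p \<omega>) ({0}\<times>{1..i}))) = T i"
    by (auto simp: arrival_def Y_def intro!: sum.cong)
  moreover have "(\<lambda>\<omega>. (\<lambda>f. f (2, i)) (restrict (\<lambda>p. Y p \<omega>) {(2, i)})) = L i"
    by (auto simp: Y_def)
  ultimately show ?thesis by simp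
qed

end

context ibnr begin

lemma prob_space_distr_T: "prob_space (distr M borel (T n))"
  by (rule prob_space_distr) simp

lemma cdf_T: "cdf_conv_pow F n x = prob {\<omega> \<in> space M. T n \<omega> \<le> x}"
proof (induction n arbitrary: x)
  case 0
  then show ?case by (simp add: T_0 prob_space)
next
  case (Suc n)
  define \<mu> where "\<mu> = distr M borel (T n)"
  define \<nu> where "\<nu> = interval_measure F"
  have \<nu>: "\<nu> = distr M borel (tau (Suc n))" unfolding \<nu>_def by (simp add: distr_tau)
  interpret \<mu>: prob_space \<mu> unfolding \<mu>_def by (rule prob_space_distr_T)
  interpret \<nu>: prob_space \<nu> unfolding \<nu> by (rule prob_space_distr) simp
  interpret P: pair_prob_space \<mu> \<nu> by unfold_locales
  have ind: "distr M (borel \<Otimes>\<^sub>M borel) (\<lambda>\<omega>. (T n \<omega>, tau (Suc n) \<omega>)) = \<mu> \<Otimes>\<^sub>M \<nu>"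
    using indep_var_distribution_eq[of borel "T n" borel "tau (Suc n)"] indep_T_tau[of n]
    unfolding \<mu>_def \<nu> by simp
  define S where "S = {p \<in> space (borel \<Otimes>\<^sub>M borel). fst p + snd p \<le> (x::real)}"
  have S[measurable]: "S \<in> sets (borel \<Otimes>\<^sub>M borel)" unfolding S_def by measurable
  have mu_real: "measure \<mu> {..a} = cdf_conv_pow F n a" for a
    unfolding Suc.IH \<mu>_def by (subst measure_distr) (auto simp: vimage_def Int_def conj_commute)
  have nn: "0 \<le> cdf_conv_pow F n a" for a using mu_real[of a] measure_nonneg by metis
  have mu_le: "emeasure \<mu> {..a} = ennreal (cdf_conv_pow F n a)" for a
    using mu_real by (simp add: \<mu>.emeasure_eq_measure)
  have meas: "(\<lambda>y. cdf_conv_pow F n (x - y)) \<in> borel_measurable borel"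
  proof -
    have "(\<lambda>y. cdf_conv_pow F n (x - y)) = (\<lambda>y. cdf \<mu> (x - y))"
      using mu_real by (auto simp: cdf_def)
    moreover have "cdf \<mu> \<in> borel_measurable borel"
      by (rule borel_measurable_mono) (auto simp: mono_def cdf_def intro!: \<mu>.finite_measure_mono, simp add: \<mu>_def)
    ultimately show ?thesis by simp
  qed
  have P1: "prob {\<omega> \<in> space M. T (Suc n) \<omega> \<le> x} = measure (\<mu> \<Otimes>\<^sub>M \<nu>) S"
    unfolding ind[symmetric] by (subst measure_distr[OF _ S], simp) (auto simp: S_def T_Suc space_pair_measure intro!: arg_cong[where f=prob])
  have "emeasure (\<mu> \<Otimes>\<^sub>M \<nu>) S = (\<integral>\<^sup>+y. emeasure \<mu> ((\<lambda>a. (a, y)) -` S) \<partial>\<nu>)"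
  proof (rule P.emeasure_pair_measure_alt2)
    have "sets (\<mu> \<Otimes>\<^sub>M \<nu>) = sets (borel \<Otimes>\<^sub>M borel)"
      by (rule sets_pair_measure_cong) (simp_all add: \<mu>_def \<nu>_def)
    then show "S \<in> sets (\<mu> \<Otimes>\<^sub>M \<nu>)" using S by simp
  qed
  also have "\<dots> = (\<integral>\<^sup>+y. ennreal (cdf_conv_pow F n (x - y)) \<partial>\<nu>)"
  proof -
    have "(\<lambda>a. (a, y)) -` S = {..x - y}" for y by (auto simp: S_def space_pair_measure)
    then show ?thesis by (simp add: mu_le)
  qed
  finally have "prob {\<omega> \<in> space M. T (Suc n) \<omega> \<le> x} = enn2real (\<integral>\<^sup>+y. ennreal (cdf_conv_pow F n (x - y)) \<partial>\<nu>)"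
    unfolding P1 by (simp add: measure_def)
  also have "\<dots> = (LINT y|\<nu>. cdf_conv_pow F n (x - y))"
    by (rule integral_eq_nn_integral[symmetric]) (use meas nn in \<open>auto simp: \<nu>_def\<close>)
  finally show ?case by (simp add: \<nu>_def)
qed

end

context ibnr begin

lemma tau_pos_all: "AE \<omega> in M. \<forall>i. i \<ge> 1 \<longrightarrow> tau i \<omega> > 0"
  using tau_pos by (subst AE_all_countable) auto

lemma T_nonneg_AE: "AE \<omega> in M. \<forall>n. T n \<omega> \<ge> 0"
  using tau_pos_all
proof eventually_elim
  case (elim \<omega>)
  then show ?case unfolding arrival_def by (intro allI sum_nonneg) (simp add: less_imp_le)
qed

lemma int_tau: fixes g :: "real \<Rightarrow> real" shows "i \<ge> 1 \<Longrightarrow> g \<in> borel_measurable borel \<Longrightarrow> (\<integral>\<omega>. g (tau i \<omega>) \<partial>M) = (\<integral>\<omega>. g (tau 1 \<omega>) \<partial>M)"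
proof -
  assume i: "i \<ge> 1" and g[measurable]: "g \<in> borel_measurable borel"
  have "(\<integral>\<omega>. g (tau i \<omega>) \<partial>M) = (\<integral>x. g x \<partial>distr M borel (tau i))"
    using i by (intro integral_distr[of "tau i" M borel g, symmetric]) auto
  also have "\<dots> = (\<integral>x. g x \<partial>distr M borel (tau 1))" using tau_id[OF i] by simp
  also have "\<dots> = (\<integral>\<omega>. g (tau 1 \<omega>) \<partial>M)"
    by (intro integral_distr[of "tau 1" M borel g]) auto
  finally show ?thesis .
qed

definition q where "q = (\<integral>\<omega>. exp (- tau 1 \<omega>) \<partial>M)"

lemma exp_T_int: "integrable M (\<lambda>\<omega>. exp (- T n \<omega>))"
  by (rule integrable_const_bound[where B=1]) (use T_nonneg_AE in \<open>auto elim!: eventually_mono\<close>)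

lemma exp_tau_int: "i \<ge> 1 \<Longrightarrow> integrable M (\<lambda>\<omega>. exp (- tau i \<omega>))"
  by (rule integrable_const_bound[where B=1]) (use tau_pos_all in \<open>auto elim!: eventually_mono\<close>)

lemma E_exp_T: "(\<integral>\<omega>. exp (- T n \<omega>) \<partial>M) = q ^ n"
proof (induction n)
  case 0 then show ?case by (simp add: T_0 prob_space)
next
  case (Suc n)
  have ind: "indep_var borel ((\<lambda>a. exp (- a)) \<circ> T n) borel ((\<lambda>a. exp (- a)) \<circ> tau (Suc n))"
    by (rule indep_var_compose[OF indep_T_tau]) auto
  have "(\<integral>\<omega>. exp (- T (Suc n) \<omega>) \<partial>M) = (\<integral>\<omega>. exp (- T n \<omega>) * exp (- tau (Suc n) \<omega>) \<partial>M)"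
    by (simp add: T_Suc exp_add[symmetric])
  also have "\<dots> = (\<integral>\<omega>. exp (- T n \<omega>) \<partial>M) * (\<integral>\<omega>. exp (- tau (Suc n) \<omega>) \<partial>M)"
    using indep_var_lebesgue_integral[OF ind] exp_T_int exp_tau_int[of "Suc n"] by (simp add: comp_def)
  also have "(\<integral>\<omega>. exp (- tau (Suc n) \<omega>) \<partial>M) = q"
    unfolding q_def by (rule int_tau) auto
  finally show ?case using Suc by simp
qed

lemma q_nonneg: "0 \<le> q"
  unfolding q_def by (rule integral_nonneg_AE) auto

lemma q_less: "q < 1"
proof -
  have int: "integrable M (\<lambda>\<omega>. 1 - exp (- tau 1 \<omega>))"
    using exp_tau_int[of 1] by auto
  have nn: "AE \<omega> in M. 0 \<le> 1 - exp (- tau 1 \<omega>)"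
    using tau_pos_all by eventually_elim auto
  have "(\<integral>\<omega>. 1 - exp (- tau 1 \<omega>) \<partial>M) \<noteq> 0"
  proof
    assume "(\<integral>\<omega>. 1 - exp (- tau 1 \<omega>) \<partial>M) = 0"
    then have "AE \<omega> in M. 1 - exp (- tau 1 \<omega>) = 0"
      using integral_nonneg_eq_0_iff_AE[OF int nn] by simp
    with tau_pos_all have "AE \<omega> in M. False" by eventually_elim auto
    then show False by simp
  qed
  moreover have "0 \<le> (\<integral>\<omega>. 1 - exp (- tau 1 \<omega>) \<partial>M)"
    by (rule integral_nonneg_AE[OF nn])
  moreover have "(\<integral>\<omega>. 1 - exp (- tau 1 \<omega>) \<partial>M) = 1 - q"
    unfolding q_def using exp_tau_int[of 1] by (simp add: prob_space)
  ultimately show ?thesis by simp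
qed

lemma prob_T_le: "prob {\<omega> \<in> space M. T n \<omega> \<le> x} \<le> exp x * q ^ n"
proof -
  have "prob {\<omega> \<in> space M. T n \<omega> \<le> x} = (\<integral>\<omega>. indicator {\<omega> \<in> space M. T n \<omega> \<le> x} \<omega> \<partial>M)"
    by (simp add: Int_absorb2)
  also have "\<dots> \<le> (\<integral>\<omega>. exp x * exp (- T n \<omega>) \<partial>M)"
  proof (rule integral_mono)
    show "integrable M (\<lambda>\<omega>. exp x * exp (- T n \<omega>))" using exp_T_int by auto
    show "integrable M (indicat_real {\<omega> \<in> space M. T n \<omega> \<le> x})"
      by (rule integrable_const_bound[where B=1]) (auto simp: indicator_def)
    fix \<omega> show "indicator {\<omega> \<in> space M. T n \<omega> \<le> x} \<omega> \<le> exp x * exp (- T n \<omega>)"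
      by (auto simp: indicator_def exp_add[symmetric])
  qed
  also have "\<dots> = exp x * q ^ n" using E_exp_T by simp
  finally show ?thesis .
qed

lemma summable_prob_T: "summable (\<lambda>n. prob {\<omega> \<in> space M. T (Suc n) \<omega> \<le> x})"
proof (rule summable_comparison_test)
  show "\<exists>N. \<forall>n\<ge>N. norm (prob {\<omega> \<in> space M. T (Suc n) \<omega> \<le> x}) \<le> exp x * q ^ Suc n"
    using prob_T_le[of "Suc _" x] by (intro exI[of _ 0] allI impI) auto
  show "summable (\<lambda>n. exp x * q ^ Suc n)"
    using q_nonneg q_less by (intro summable_mult) (simp add: summable_geometric)
qed

lemma renewal_fun_eq: "renewal_fun F x = (\<Sum>n. prob {\<omega> \<in> space M. T (Suc n) \<omega> \<le> x})"
  unfolding renewal_fun_def cdf_T ..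

end

context ibnr begin

definition Tp :: "nat \<times> 'a \<Rightarrow> real" where "Tp p = T (Suc (fst p)) (snd p)"

lemma Tp_meas[measurable]: "Tp \<in> borel_measurable (count_space UNIV \<Otimes>\<^sub>M M)"
  unfolding Tp_def by (rule measurable_pair_measure_countable1) auto

definition rnu :: "real measure" where "rnu = distr (count_space UNIV \<Otimes>\<^sub>M M) borel Tp"

lemma sets_rnu[simp, measurable_cong]: "sets rnu = sets borel" by (simp add: rnu_def)
lemma space_rnu[simp]: "space rnu = UNIV" by (simp add: rnu_def)

lemma nn_integral_rnu:
  assumes g[measurable]: "g \<in> borel_measurable borel"
  shows "(\<integral>\<^sup>+x. g x \<partial>rnu) = (\<Sum>n. \<integral>\<^sup>+\<omega>. g (T (Suc n) \<omega>) \<partial>M)"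
proof -
  have "(\<integral>\<^sup>+x. g x \<partial>rnu) = (\<integral>\<^sup>+p. g (Tp p) \<partial>(count_space UNIV \<Otimes>\<^sub>M M))"
    unfolding rnu_def by (rule nn_integral_distr) auto
  also have "\<dots> = (\<integral>\<^sup>+n. \<integral>\<^sup>+\<omega>. g (Tp (n, \<omega>)) \<partial>M \<partial>count_space UNIV)"
    by (rule nn_integral_fst[symmetric]) measurable
  also have "\<dots> = (\<Sum>n. \<integral>\<^sup>+\<omega>. g (T (Suc n) \<omega>) \<partial>M)"
    by (simp add: nn_integral_count_space_nat Tp_def)
  finally show ?thesis .
qed

lemma emeasure_rnu:
  assumes A[measurable]: "A \<in> sets borel"
  shows "emeasure rnu A = (\<Sum>n. emeasure M {\<omega> \<in> space M. T (Suc n) \<omega> \<in> A})"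
proof -
  have "emeasure rnu A = (\<integral>\<^sup>+x. indicator A x \<partial>rnu)" by simp
  also have "\<dots> = (\<Sum>n. \<integral>\<^sup>+\<omega>. indicator A (T (Suc n) \<omega>) \<partial>M)"
    by (rule nn_integral_rnu) simp
  also have "\<dots> = (\<Sum>n. emeasure M {\<omega> \<in> space M. T (Suc n) \<omega> \<in> A})"
  proof (intro suminf_cong)
    fix n
    have "(\<integral>\<^sup>+\<omega>. indicator A (T (Suc n) \<omega>) \<partial>M) = (\<integral>\<^sup>+\<omega>. indicator {\<omega> \<in> space M. T (Suc n) \<omega> \<in> A} \<omega> \<partial>M)"
      by (intro nn_integral_cong) (auto simp: indicator_def)
    then show "(\<integral>\<^sup>+\<omega>. indicator A (T (Suc n) \<omega>) \<partial>M) = emeasure M {\<omega> \<in> space M. T (Suc n) \<omega> \<in> A}"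
      by simp
  qed
  finally show ?thesis .
qed

abbreviation m where "m \<equiv> renewal_fun F"

lemma rnu_Iic: "emeasure rnu {..x} = ennreal (m x)"
proof -
  have "emeasure rnu {..x} = (\<Sum>n. emeasure M {\<omega> \<in> space M. T (Suc n) \<omega> \<in> {..x}})"
    by (rule emeasure_rnu) simp
  also have "\<dots> = (\<Sum>n. ennreal (prob {\<omega> \<in> space M. T (Suc n) \<omega> \<le> x}))"
    by (simp add: emeasure_eq_measure)
  also have "\<dots> = ennreal (m x)"
    unfolding renewal_fun_eq by (rule suminf_ennreal2) (auto simp: summable_prob_T)
  finally show ?thesis .
qed

lemma m_nonneg: "0 \<le> m x"
  unfolding renewal_fun_eq by (rule suminf_nonneg) (auto simp: summable_prob_T)

lemma m_mono: "x \<le> y \<Longrightarrow> m x \<le> m y"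
  unfolding renewal_fun_eq
  by (intro suminf_le summable_prob_T allI finite_measure_mono) auto

lemma m_right_cont: "continuous (at_right a) m"
  unfolding continuous_within
proof (rule tendsto_at_right_sequentially[where b="a + 1"])
  fix S :: "nat \<Rightarrow> real" assume S: "\<And>n. a < S n" "\<And>n. S n < a + 1" "decseq S" "S \<longlonglongrightarrow> a"
  have "(\<lambda>n. emeasure rnu {..S n}) \<longlonglongrightarrow> emeasure rnu (\<Inter>n. {..S n})"
    using S(3) by (intro Lim_emeasure_decseq) (auto simp: decseq_def rnu_Iic)
  also have "(\<Inter>n. {..S n}) = {..a}"
    using decseq_ge[OF S(3,4)] by (auto intro: order_trans LIMSEQ_le_const[OF S(4)])
  finally have "(\<lambda>n. enn2real (emeasure rnu {..S n})) \<longlonglongrightarrow> m a"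
    by (intro tendsto_enn2real) (simp_all add: rnu_Iic m_nonneg)
  then show "(\<lambda>n. m (S n)) \<longlonglongrightarrow> m a"
    by (simp add: rnu_Iic m_nonneg del: renewal_fun_def)
qed simp

lemma rnu_Ioc: assumes "a \<le> b" shows "emeasure rnu {a<..b} = m b - m a"
proof -
  have "{a<..b} = {..b} - {..a}" by auto
  then have "emeasure rnu {a<..b} = emeasure rnu {..b} - emeasure rnu {..a}"
    using assms by (simp add: emeasure_Diff rnu_Iic)
  then show ?thesis by (simp add: rnu_Iic ennreal_minus m_nonneg)
qed

lemma interval_measure_m: "interval_measure m = rnu"
proof (rule measure_eqI_generator_eq[where \<Omega>=UNIV and E="range (\<lambda>(a, b). {a<..b::real})"
      and A="\<lambda>i. {- real (i::nat)<..real i}"])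
  fix X assume "X \<in> range (\<lambda>(a, b). {a<..b::real})"
  then obtain a b where Xeq: "X = {a<..b}" by auto
  then show "emeasure (interval_measure m) X = emeasure rnu X"
    by (cases "a \<le> b") (simp_all add: emeasure_interval_measure_Ioc m_mono m_right_cont rnu_Ioc)
next
  show "(\<Union>i. {- real (i::nat)<..real i}) = UNIV"
    by (rule UN_Ioc_eq_UNIV)
  fix i :: nat show "emeasure (interval_measure m) {- real i<..real i} \<noteq> \<infinity>"
    by (simp add: emeasure_interval_measure_Ioc m_mono m_right_cont)
qed (auto simp: borel_sigma_sets_Ioc Int_stable_def)

end

context ibnr begin

definition hh :: "real \<Rightarrow> real \<Rightarrow> real \<times> real \<Rightarrow> real" where
  "hh \<delta> t p = exp (- \<delta> * (fst p + snd p)) * (if fst p \<le> t \<and> t < fst p + snd p then 1 else 0)"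

definition kk :: "real \<Rightarrow> real \<Rightarrow> real \<Rightarrow> real" where
  "kk \<delta> t a = (if a \<le> t then exp (- \<delta> * t) * dickson_hipp \<delta> w (t - a) else 0)"

lemma hh_meas[measurable]: "hh \<delta> t \<in> borel_measurable (borel \<Otimes>\<^sub>M borel)"
  unfolding hh_def by measurable

lemma hh_nonneg: "0 \<le> hh \<delta> t p" unfolding hh_def by auto

lemma hh_le1: "\<delta> \<ge> 0 \<Longrightarrow> t \<ge> 0 \<Longrightarrow> hh \<delta> t p \<le> 1"
  unfolding hh_def by auto

lemma w_meas[measurable]: "w \<in> borel_measurable borel"
  using distributed_real_measurable[OF _ w_pdf] w_nonneg by simp

lemma dens_L: "i \<ge> 1 \<Longrightarrow> distr M borel (L i) = density lborel w"
proof -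
  assume "i \<ge> 1"
  then have "distr M borel (L i) = distr M borel (L 1)" by (rule L_id)
  also have "\<dots> = distr M lborel (L 1)" by (rule distr_cong) auto
  also have "\<dots> = density lborel w" using distributed_distr_eq_density[OF w_pdf] by simp
  finally show ?thesis .
qed

lemma w_int: "integrable lborel w"
proof (rule integrableI_nn_integral_finite[where x=1])
  have "(\<integral>\<^sup>+x. ennreal (w x) \<partial>lborel) = emeasure (density lborel w) UNIV"
    by (simp add: emeasure_density)
  also have "\<dots> = emeasure (distr M borel (L 1)) UNIV" by (simp add: dens_L)
  also have "\<dots> = 1" by (subst emeasure_distr) (auto simp: emeasure_space_1[symmetric] intro!: arg_cong[where f="emeasure M"])
  finally show "(\<integral>\<^sup>+x. ennreal (w x) \<partial>lborel) = ennreal 1" by simp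
qed (auto simp: w_nonneg)

lemma dh_meas[measurable]: "(\<lambda>v. dickson_hipp \<delta> w v) \<in> borel_measurable borel"
proof -
  have se: "sets (borel \<Otimes>\<^sub>M lborel) = sets (borel \<Otimes>\<^sub>M (borel::real measure))"
    by (rule sets_pair_measure_cong) auto
  have eq: "(\<lambda>(v,y). indicator {v..} y *\<^sub>R (exp (-\<delta>*(y - v)) * w y)) =
      (\<lambda>p::real\<times>real. (if fst p \<le> snd p then 1 else 0) * (exp(-\<delta>*(snd p - fst p)) * w (snd p)))"
    by (auto simp: fun_eq_iff indicator_def)
  have m: "(\<lambda>(v,y). indicator {v..} y *\<^sub>R (exp (-\<delta>*(y - v)) * w y)) \<in> borel_measurable (borel \<Otimes>\<^sub>M lborel)"
    unfolding eq measurable_cong_sets[OF se refl] by measurable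
  show ?thesis
    unfolding dickson_hipp_def set_lebesgue_integral_def
    using lborel.borel_measurable_lebesgue_integral[OF m] by simp
qed

lemma kk_meas[measurable]: "kk \<delta> t \<in> borel_measurable borel"
  unfolding kk_def by measurable

lemma dh_nonneg: "0 \<le> dickson_hipp \<delta> w v"
  unfolding dickson_hipp_def set_lebesgue_integral_def
  by (rule integral_nonneg_AE) (auto simp: w_nonneg)

lemma kk_nonneg: "0 \<le> kk \<delta> t a"
  unfolding kk_def using dh_nonneg by auto

lemma inner:
  assumes \<delta>: "\<delta> \<ge> 0" and t: "t \<ge> 0"
  shows "(\<integral>\<^sup>+b. ennreal (hh \<delta> t (a, b)) \<partial>density lborel w) = ennreal (kk \<delta> t a)"
proof -
  have "(\<integral>\<^sup>+b. ennreal (hh \<delta> t (a, b)) \<partial>density lborel w) = (\<integral>\<^sup>+b. ennreal (w b) * ennreal (hh \<delta> t (a, b)) \<partial>lborel)"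
    by (rule nn_integral_density) auto
  also have "\<dots> = (\<integral>\<^sup>+b. ennreal (w b * hh \<delta> t (a, b)) \<partial>lborel)"
    by (simp add: ennreal_mult w_nonneg hh_nonneg)
  also have "\<dots> = ennreal (kk \<delta> t a)"
  proof (cases "a \<le> t")
    case False
    then show ?thesis by (simp add: hh_def kk_def)
  next
    case True
    define v where "v = t - a"
    define G where "G b = indicator {v..} b * (exp (- \<delta> * t) * (exp (- \<delta> * (b - v)) * w b))" for b
    have "(\<integral>\<^sup>+b. ennreal (w b * hh \<delta> t (a, b)) \<partial>lborel) = (\<integral>\<^sup>+b. ennreal (G b) \<partial>lborel)"
    proof (rule nn_integral_cong_AE)
      show "AE b in lborel. ennreal (w b * hh \<delta> t (a, b)) = ennreal (G b)"
        using AE_lborel_singleton[of v]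
      proof eventually_elim
        case (elim b)
        have e: "exp (- \<delta> * t) * exp (- \<delta> * (b - v)) = exp (- \<delta> * (a + b))"
          unfolding v_def exp_add[symmetric] by (simp add: algebra_simps)
        show ?case using elim True e
          by (auto simp: G_def hh_def indicator_def v_def mult.commute mult.left_commute)
      qed
    qed
    also have "\<dots> = ennreal (\<integral>b. G b \<partial>lborel)"
    proof (rule nn_integral_eq_integral)
      show "integrable lborel G"
      proof (rule Bochner_Integration.integrable_bound[OF w_int])
        show "G \<in> borel_measurable lborel" unfolding G_def by measurable
        show "AE x in lborel. norm (G x) \<le> norm (w x)"
        proof (rule AE_I2)
          fix x
          have "exp (- \<delta> * t) \<le> 1" using \<delta> t by simp
          moreover have "x \<ge> v \<Longrightarrow> exp (- \<delta> * (x - v)) \<le> 1" using \<delta> by simp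
          ultimately have "x \<ge> v \<Longrightarrow> exp (- \<delta> * t) * exp (- \<delta> * (x - v)) \<le> 1"
            by (metis exp_ge_zero mult_le_one)
          then show "norm (G x) \<le> norm (w x)"
            using w_nonneg[of x]
            by (auto simp: G_def indicator_def abs_mult mult.assoc[symmetric] intro!: mult_left_le_one_le)
        qed
      qed
      show "AE x in lborel. 0 \<le> G x" by (auto simp: G_def w_nonneg)
    qed
    also have "(\<integral>b. G b \<partial>lborel) = kk \<delta> t a"
      using True unfolding G_def kk_def dickson_hipp_def set_lebesgue_integral_def v_def
      by (simp add: mult.left_commute[of "indicat_real _ _"])
    finally show ?thesis .
  qed
  finally show ?thesis .
qed

end

context ibnr begin

lemma nn_term:
  assumes i: "i \<ge> 1" and \<delta>: "\<delta> \<ge> 0" and t: "t \<ge> 0"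
  shows "(\<integral>\<^sup>+\<omega>. ennreal (hh \<delta> t (T i \<omega>, L i \<omega>)) \<partial>M) = (\<integral>\<^sup>+\<omega>. ennreal (kk \<delta> t (T i \<omega>)) \<partial>M)"
proof -
  define \<mu> where "\<mu> = distr M borel (T i)"
  define \<kappa> where "\<kappa> = distr M borel (L i)"
  have \<kappa>d: "\<kappa> = density lborel w" unfolding \<kappa>_def using dens_L[OF i] .
  interpret \<mu>: prob_space \<mu> unfolding \<mu>_def by (rule prob_space_distr) simp
  interpret \<kappa>: prob_space \<kappa> unfolding \<kappa>_def by (rule prob_space_distr) (use L_meas[OF i] in simp)
  interpret P: pair_prob_space \<mu> \<kappa> by unfold_locales
  have joint: "distr M (borel \<Otimes>\<^sub>M borel) (\<lambda>\<omega>. (T i \<omega>, L i \<omega>)) = \<mu> \<Otimes>\<^sub>M \<kappa>"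
    using indep_var_distribution_eq[of borel "T i" borel "L i"] indep_T_L[OF i]
    unfolding \<mu>_def \<kappa>_def by simp
  have sets_eq: "sets (\<mu> \<Otimes>\<^sub>M \<kappa>) = sets (borel \<Otimes>\<^sub>M borel)"
    by (rule sets_pair_measure_cong) (simp_all add: \<mu>_def \<kappa>_def)
  have hm: "(\<lambda>p. ennreal (hh \<delta> t p)) \<in> borel_measurable (\<mu> \<Otimes>\<^sub>M \<kappa>)"
    unfolding measurable_cong_sets[OF sets_eq refl] by measurable
  have "(\<integral>\<^sup>+\<omega>. ennreal (hh \<delta> t (T i \<omega>, L i \<omega>)) \<partial>M)
      = (\<integral>\<^sup>+p. ennreal (hh \<delta> t p) \<partial>distr M (borel \<Otimes>\<^sub>M borel) (\<lambda>\<omega>. (T i \<omega>, L i \<omega>)))"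
    using i by (intro nn_integral_distr[symmetric]) auto
  also have "\<dots> = (\<integral>\<^sup>+p. ennreal (hh \<delta> t p) \<partial>(\<mu> \<Otimes>\<^sub>M \<kappa>))" by (simp add: joint)
  also have "\<dots> = (\<integral>\<^sup>+a. \<integral>\<^sup>+b. ennreal (hh \<delta> t (a, b)) \<partial>\<kappa> \<partial>\<mu>)"
    by (rule \<kappa>.nn_integral_fst[symmetric, OF hm])
  also have "\<dots> = (\<integral>\<^sup>+a. ennreal (kk \<delta> t a) \<partial>\<mu>)"
    unfolding \<kappa>d by (intro nn_integral_cong inner \<delta> t)
  also have "\<dots> = (\<integral>\<^sup>+\<omega>. ennreal (kk \<delta> t (T i \<omega>)) \<partial>M)"
    unfolding \<mu>_def by (intro nn_integral_distr) auto
  finally show ?thesis .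
qed

lemma hh_T_int: "\<delta> \<ge> 0 \<Longrightarrow> t \<ge> 0 \<Longrightarrow> i \<ge> 1 \<Longrightarrow> integrable M (\<lambda>\<omega>. hh \<delta> t (T i \<omega>, L i \<omega>))"
proof (rule integrable_const_bound[where B=1])
  assume "i \<ge> 1"
  then have [measurable]: "L i \<in> borel_measurable M" by (rule L_meas)
  show "(\<lambda>\<omega>. hh \<delta> t (T i \<omega>, L i \<omega>)) \<in> borel_measurable M" by measurable
qed (auto simp: hh_nonneg hh_le1)

lemma X_same:
  fixes g :: "real \<Rightarrow> real"
  assumes i: "i \<ge> 1" and g[measurable]: "g \<in> borel_measurable borel"
  shows "integrable M (\<lambda>\<omega>. g (X i \<omega>)) \<longleftrightarrow> integrable M (\<lambda>\<omega>. g (X 1 \<omega>))"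
    and "(\<integral>\<omega>. g (X i \<omega>) \<partial>M) = (\<integral>\<omega>. g (X 1 \<omega>) \<partial>M)"
proof -
  have "integrable M (\<lambda>\<omega>. g (X i \<omega>)) \<longleftrightarrow> integrable (distr M borel (X i)) g"
    using i by (intro integrable_distr_eq[symmetric]) auto
  also have "\<dots> \<longleftrightarrow> integrable (distr M borel (X 1)) g" by (simp add: X_id[OF i])
  also have "\<dots> \<longleftrightarrow> integrable M (\<lambda>\<omega>. g (X 1 \<omega>))"
    by (intro integrable_distr_eq) auto
  finally show "integrable M (\<lambda>\<omega>. g (X i \<omega>)) \<longleftrightarrow> integrable M (\<lambda>\<omega>. g (X 1 \<omega>))" .
  have "(\<integral>\<omega>. g (X i \<omega>) \<partial>M) = (\<integral>x. g x \<partial>distr M borel (X i))"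
    using i by (intro integral_distr[of "X i" M borel g, symmetric]) auto
  also have "\<dots> = (\<integral>x. g x \<partial>distr M borel (X 1))" by (simp add: X_id[OF i])
  also have "\<dots> = (\<integral>\<omega>. g (X 1 \<omega>) \<partial>M)"
    by (intro integral_distr[of "X 1" M borel g]) auto
  finally show "(\<integral>\<omega>. g (X i \<omega>) \<partial>M) = (\<integral>\<omega>. g (X 1 \<omega>) \<partial>M)" .
qed

definition cc :: "real \<Rightarrow> real \<Rightarrow> nat \<Rightarrow> real" where
  "cc \<delta> t i = (\<integral>\<omega>. hh \<delta> t (T i \<omega>, L i \<omega>) \<partial>M)"

lemma cc_nonneg: "0 \<le> cc \<delta> t i"
  unfolding cc_def by (rule integral_nonneg_AE) (auto simp: hh_nonneg)

lemma ennreal_cc: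
  assumes i: "i \<ge> 1" and \<delta>: "\<delta> \<ge> 0" and t: "t \<ge> 0"
  shows "ennreal (cc \<delta> t i) = (\<integral>\<^sup>+\<omega>. ennreal (kk \<delta> t (T i \<omega>)) \<partial>M)"
  unfolding cc_def nn_term[OF assms, symmetric]
  by (rule nn_integral_eq_integral[symmetric]) (auto simp: hh_T_int[OF \<delta> t i] hh_nonneg)

lemma E_term:
  assumes i: "i \<ge> 1" and \<delta>: "\<delta> \<ge> 0" and t: "t \<ge> 0"
  shows "integrable M (\<lambda>\<omega>. hh \<delta> t (T i \<omega>, L i \<omega>) * X i \<omega>)"
    and "(\<integral>\<omega>. hh \<delta> t (T i \<omega>, L i \<omega>) * X i \<omega> \<partial>M) = cc \<delta> t i * (\<integral>\<omega>. X 1 \<omega> \<partial>M)"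
    and "(\<integral>\<omega>. norm (hh \<delta> t (T i \<omega>, L i \<omega>) * X i \<omega>) \<partial>M) = cc \<delta> t i * (\<integral>\<omega>. norm (X 1 \<omega>) \<partial>M)"
proof -
  have ind: "indep_var borel (\<lambda>\<omega>. hh \<delta> t (T i \<omega>, L i \<omega>)) borel (X i)"
    by (rule indep_TL_X[OF i]) simp
  have ind2: "indep_var borel ((\<lambda>x. x) \<circ> (\<lambda>\<omega>. hh \<delta> t (T i \<omega>, L i \<omega>))) borel (abs \<circ> X i)"
    by (rule indep_var_compose[OF ind]) auto
  have Xi: "integrable M (X i)"
    using X_same(1)[OF i, of "\<lambda>x. x"] X_int by simp
  have Xa: "integrable M (\<lambda>\<omega>. \<bar>X i \<omega>\<bar>)" using Xi by auto
  show "integrable M (\<lambda>\<omega>. hh \<delta> t (T i \<omega>, L i \<omega>) * X i \<omega>)"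
    by (rule indep_var_integrable[OF ind hh_T_int[OF \<delta> t i] Xi])
  show "(\<integral>\<omega>. hh \<delta> t (T i \<omega>, L i \<omega>) * X i \<omega> \<partial>M) = cc \<delta> t i * (\<integral>\<omega>. X 1 \<omega> \<partial>M)"
    using indep_var_lebesgue_integral[OF ind hh_T_int[OF \<delta> t i] Xi] X_same(2)[OF i, of "\<lambda>x. x"]
    by (simp add: cc_def)
  have "(\<integral>\<omega>. norm (hh \<delta> t (T i \<omega>, L i \<omega>) * X i \<omega>) \<partial>M) = (\<integral>\<omega>. hh \<delta> t (T i \<omega>, L i \<omega>) * \<bar>X i \<omega>\<bar> \<partial>M)"
    by (simp add: abs_mult hh_nonneg)
  also have "\<dots> = cc \<delta> t i * (\<integral>\<omega>. \<bar>X i \<omega>\<bar> \<partial>M)"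
    using indep_var_lebesgue_integral[OF ind2] hh_T_int[OF \<delta> t i] Xa
    by (simp add: cc_def comp_def)
  also have "(\<integral>\<omega>. \<bar>X i \<omega>\<bar> \<partial>M) = (\<integral>\<omega>. norm (X 1 \<omega>) \<partial>M)"
    using X_same(2)[OF i, of abs] by simp
  finally show "(\<integral>\<omega>. norm (hh \<delta> t (T i \<omega>, L i \<omega>) * X i \<omega>) \<partial>M) = cc \<delta> t i * (\<integral>\<omega>. norm (X 1 \<omega>) \<partial>M)" .
qed

end

context ibnr begin

lemma cc_le: assumes "\<delta> \<ge> 0" "t \<ge> 0" "i \<ge> 1"
  shows "cc \<delta> t i \<le> prob {\<omega> \<in> space M. T i \<omega> \<le> t}"
proof -
  have "cc \<delta> t i \<le> (\<integral>\<omega>. indicator {\<omega> \<in> space M. T i \<omega> \<le> t} \<omega> \<partial>M)"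
    unfolding cc_def
  proof (rule integral_mono)
    show "integrable M (\<lambda>\<omega>. hh \<delta> t (T i \<omega>, L i \<omega>))" by (rule hh_T_int[OF assms])
    show "integrable M (indicat_real {\<omega> \<in> space M. T i \<omega> \<le> t})"
      by (rule integrable_const_bound[where B=1]) (auto simp: indicator_def)
    fix \<omega> assume "\<omega> \<in> space M"
    then show "hh \<delta> t (T i \<omega>, L i \<omega>) \<le> indicator {\<omega> \<in> space M. T i \<omega> \<le> t} \<omega>"
      using hh_le1[OF assms(1,2), of "(T i \<omega>, L i \<omega>)"]
      by (cases "T i \<omega> \<le> t") (auto simp: indicator_def hh_def)
  qed
  also have "\<dots> = prob {\<omega> \<in> space M. T i \<omega> \<le> t}" by (simp add: Int_absorb2)
  finally show ?thesis .
qed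

lemma summable_cc: assumes "\<delta> \<ge> 0" "t \<ge> 0" shows "summable (\<lambda>j. cc \<delta> t (Suc j))"
proof (rule summable_comparison_test)
  show "\<exists>N. \<forall>n\<ge>N. norm (cc \<delta> t (Suc n)) \<le> prob {\<omega> \<in> space M. T (Suc n) \<omega> \<le> t}"
    using cc_le[OF assms] cc_nonneg by auto
qed (rule summable_prob_T)

lemma m0: "m 0 = 0"
proof -
  have "prob {\<omega> \<in> space M. T (Suc n) \<omega> \<le> 0} = 0" for n
  proof -
    have "AE \<omega> in M. 0 < T (Suc n) \<omega>"
      using T_nonneg_AE tau_pos_all by eventually_elim (auto simp: T_Suc add_nonneg_pos)
    then have "emeasure M {\<omega> \<in> space M. T (Suc n) \<omega> \<le> 0} = 0"
      by (subst (asm) AE_iff_measurable[OF _ refl]) (auto simp: not_less)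
    then show ?thesis by (simp add: emeasure_eq_measure)
  qed
  then show ?thesis unfolding renewal_fun_eq by simp
qed

lemma AE_rnu_pos: "AE x in rnu. 0 < x"
proof -
  have "{x \<in> space rnu. \<not> 0 < x} = {..0}" by auto
  moreover have "emeasure rnu {..0} = 0" using rnu_Iic[of 0] m0 by simp
  ultimately show ?thesis by (subst AE_iff_measurable[OF _ refl]) auto
qed

lemma main:
  assumes \<delta>: "\<delta> \<ge> 0" and t: "t > 0"
  shows "(LINT \<omega>|M. IBNR_disc tau X L \<delta> t \<omega>)
           = (LINT \<omega>|M. X 1 \<omega>) * exp (- \<delta> * t) *
             (LINT x:{0..t}|interval_measure (renewal_fun F). dickson_hipp \<delta> w (t - x))"
proof -
  have t0: "t \<ge> 0" using t by simp
  define f where "f j \<omega> = hh \<delta> t (T (Suc j) \<omega>, L (Suc j) \<omega>) * X (Suc j) \<omega>" for j \<omega>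
  have fm[measurable]: "f j \<in> borel_measurable M" for j
    unfolding f_def using L_meas[of "Suc j"] X_meas[of "Suc j"] by measurable
  have IB: "IBNR_disc tau X L \<delta> t \<omega> = (\<Sum>j. f j \<omega>)" for \<omega>
    unfolding IBNR_disc_def f_def hh_def Let_def by simp
  have fint: "integrable M (f j)" for j
    unfolding f_def using E_term(1)[of "Suc j" \<delta> t] \<delta> t0 by simp
  have fE: "(\<integral>\<omega>. f j \<omega> \<partial>M) = cc \<delta> t (Suc j) * (\<integral>\<omega>. X 1 \<omega> \<partial>M)" for j
    unfolding f_def using E_term(2)[of "Suc j" \<delta> t] \<delta> t0 by simp
  have fN: "(\<integral>\<omega>. norm (f j \<omega>) \<partial>M) = cc \<delta> t (Suc j) * (\<integral>\<omega>. norm (X 1 \<omega>) \<partial>M)" for j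
    unfolding f_def using E_term(3)[of "Suc j" \<delta> t] \<delta> t0 by simp
  have sc: "summable (\<lambda>j. cc \<delta> t (Suc j))" by (rule summable_cc[OF \<delta> t0])
  have sN: "summable (\<lambda>j. \<integral>\<omega>. norm (f j \<omega>) \<partial>M)"
    unfolding fN by (intro summable_mult2 sc)
  have AEs: "AE \<omega> in M. summable (\<lambda>j. norm (f j \<omega>))"
  proof -
    have "(\<integral>\<^sup>+\<omega>. (\<Sum>j. ennreal (norm (f j \<omega>))) \<partial>M) = (\<Sum>j. \<integral>\<^sup>+\<omega>. ennreal (norm (f j \<omega>)) \<partial>M)"
      by (rule nn_integral_suminf) measurable
    also have "\<dots> = (\<Sum>j. ennreal (\<integral>\<omega>. norm (f j \<omega>) \<partial>M))"
      by (intro suminf_cong nn_integral_eq_integral integrable_norm fint) auto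
    also have "\<dots> = ennreal (\<Sum>j. \<integral>\<omega>. norm (f j \<omega>) \<partial>M)"
      by (rule suminf_ennreal2) (auto simp del: real_norm_def intro: sN)
    finally have fin: "(\<integral>\<^sup>+\<omega>. (\<Sum>j. ennreal (norm (f j \<omega>))) \<partial>M) \<noteq> \<infinity>" by simp
    have "AE \<omega> in M. (\<Sum>j. ennreal (norm (f j \<omega>))) \<noteq> \<infinity>"
      by (rule nn_integral_PInf_AE[OF _ fin]) measurable
    then show ?thesis
      by eventually_elim (rule summable_suminf_not_top, auto)
  qed
  have "(LINT \<omega>|M. IBNR_disc tau X L \<delta> t \<omega>) = (\<integral>\<omega>. (\<Sum>j. f j \<omega>) \<partial>M)"
    by (simp add: IB)
  also have "\<dots> = (\<Sum>j. \<integral>\<omega>. f j \<omega> \<partial>M)"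
    by (rule integral_suminf[OF fint AEs sN])
  also have "\<dots> = (\<Sum>j. cc \<delta> t (Suc j)) * (\<integral>\<omega>. X 1 \<omega> \<partial>M)"
    unfolding fE by (rule suminf_mult2[OF sc, symmetric])
  also have "(\<Sum>j. cc \<delta> t (Suc j)) = (\<integral>x. kk \<delta> t x \<partial>rnu)"
  proof -
    have "(\<integral>\<^sup>+x. ennreal (kk \<delta> t x) \<partial>rnu) = (\<Sum>j. \<integral>\<^sup>+\<omega>. ennreal (kk \<delta> t (T (Suc j) \<omega>)) \<partial>M)"
      by (rule nn_integral_rnu) measurable
    also have "\<dots> = (\<Sum>j. ennreal (cc \<delta> t (Suc j)))"
      by (intro suminf_cong ennreal_cc[symmetric] \<delta> t0) simp
    also have "\<dots> = ennreal (\<Sum>j. cc \<delta> t (Suc j))"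
      by (rule suminf_ennreal2) (auto intro: sc cc_nonneg)
    finally have "(\<integral>\<^sup>+x. ennreal (kk \<delta> t x) \<partial>rnu) = ennreal (\<Sum>j. cc \<delta> t (Suc j))" .
    then have "integrable rnu (kk \<delta> t) \<and> (\<integral>x. kk \<delta> t x \<partial>rnu) = (\<Sum>j. cc \<delta> t (Suc j))"
      by (subst (asm) nn_integral_eq_integrable) (auto simp: kk_nonneg intro!: suminf_nonneg sc cc_nonneg)
    then show ?thesis by simp
  qed
  also have "(\<integral>x. kk \<delta> t x \<partial>rnu) = exp (- \<delta> * t) * (LINT x:{0..t}|rnu. dickson_hipp \<delta> w (t - x))"
  proof -
    have "(\<integral>x. kk \<delta> t x \<partial>rnu) = (\<integral>x. exp (- \<delta> * t) * (indicator {0..t} x * dickson_hipp \<delta> w (t - x)) \<partial>rnu)"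
      using AE_rnu_pos by (intro integral_cong_AE) (auto simp: kk_def indicator_def elim!: eventually_mono)
    then show ?thesis unfolding set_lebesgue_integral_def by simp
  qed
  finally show ?thesis by (simp add: interval_measure_m mult.assoc mult.commute mult.left_commute)
qed

end

context ibnr begin

lemma w_nn1: "(\<integral>\<^sup>+x. ennreal (w x) \<partial>lborel) = 1"
proof -
  have "(\<integral>\<^sup>+x. ennreal (w x) \<partial>lborel) = emeasure (density lborel w) UNIV"
    by (simp add: emeasure_density)
  also have "\<dots> = emeasure (distr M borel (L 1)) UNIV" by (simp add: dens_L)
  also have "\<dots> = 1" by (subst emeasure_distr) (auto simp: emeasure_space_1[symmetric] intro!: arg_cong[where f="emeasure M"])
  finally show ?thesis .
qed

lemma int_ind_w: "A \<in> sets borel \<Longrightarrow> integrable lborel (\<lambda>y. indicator A y * w y)"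
  by (rule Bochner_Integration.integrable_bound[OF w_int]) (auto simp: indicator_def w_nonneg)

lemma W_int: "W v = (\<integral>y. indicator {..v} y * w y \<partial>lborel)"
proof -
  have "W v = measure (distr M borel (L 1)) {..v}"
    unfolding W_def by (subst measure_distr) (auto intro!: arg_cong[where f="measure M"])
  also have "\<dots> = measure (density lborel w) {..v}" by (simp add: dens_L)
  also have "\<dots> = enn2real (\<integral>\<^sup>+y. ennreal (w y) * indicator {..v} y \<partial>lborel)"
    unfolding measure_def by (subst emeasure_density) auto
  also have "(\<integral>\<^sup>+y. ennreal (w y) * indicator {..v} y \<partial>lborel) = (\<integral>\<^sup>+y. ennreal (indicator {..v} y * w y) \<partial>lborel)"
    by (intro nn_integral_cong) (auto simp: indicator_def)
  also have "\<dots> = ennreal (\<integral>y. indicator {..v} y * w y \<partial>lborel)"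
    by (rule nn_integral_eq_integral[OF int_ind_w]) (auto simp: w_nonneg)
  finally show ?thesis by (simp add: integral_nonneg_AE w_nonneg)
qed

lemma dh0: "dickson_hipp 0 w v = 1 - W v"
proof -
  have I1: "(\<integral>y. w y \<partial>lborel) = 1"
    using nn_integral_eq_integral[OF w_int] w_nn1 w_nonneg by simp
  have "(\<integral>y. indicator {..v} y * w y \<partial>lborel) = (\<integral>y. indicator {..<v} y * w y \<partial>lborel)"
    using AE_lborel_singleton[of v] by (intro integral_cong_AE) (auto elim!: eventually_mono simp: indicator_def)
  moreover have "(\<integral>y. indicator {v..} y * w y \<partial>lborel) + (\<integral>y. indicator {..<v} y * w y \<partial>lborel) = (\<integral>y. w y \<partial>lborel)"
  proof -
    have "(\<integral>y. indicator {v..} y * w y \<partial>lborel) + (\<integral>y. indicator {..<v} y * w y \<partial>lborel)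
        = (\<integral>y. indicator {v..} y * w y + indicator {..<v} y * w y \<partial>lborel)"
      by (rule Bochner_Integration.integral_add[where M=lborel and f="\<lambda>y. indicator {v..} y * w y" and g="\<lambda>y. indicator {..<v} y * w y", symmetric]) (auto intro: int_ind_w)
    also have "\<dots> = (\<integral>y. w y \<partial>lborel)"
      by (intro Bochner_Integration.integral_cong) (auto simp: indicator_def)
    finally show ?thesis .
  qed
  ultimately show ?thesis
    unfolding dickson_hipp_def set_lebesgue_integral_def W_int using I1 by simp
qed

end

theorem proposition1:
  fixes M :: "'a measure"
    and tau X L :: "nat \<Rightarrow> 'a \<Rightarrow> real"
    and F f W w :: "real \<Rightarrow> real"
    and \<delta> t :: real
  assumes M: "prob_space M"
    and indep: "prob_space.indep_vars M (\<lambda>_. borel)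
          (\<lambda>(k::nat, i). if k = 0 then tau i else if k = 1 then X i else L i)
          ({0, 1, 2} \<times> {1..})"
    and tau_id: "\<And>i. i \<ge> 1 \<Longrightarrow> distr M borel (tau i) = distr M borel (tau 1)"
    and X_id: "\<And>i. i \<ge> 1 \<Longrightarrow> distr M borel (X i) = distr M borel (X 1)"
    and L_id: "\<And>i. i \<ge> 1 \<Longrightarrow> distr M borel (L i) = distr M borel (L 1)"
    and tau_pos: "\<And>i. i \<ge> 1 \<Longrightarrow> AE \<omega> in M. tau i \<omega> > 0"
    and F_def: "\<And>x. F x = measure M {\<omega> \<in> space M. tau 1 \<omega> \<le> x}"
    and f_nonneg: "\<And>x. 0 \<le> f x"
    and f_pdf: "distributed M lborel (tau 1) (\<lambda>x. ennreal (f x))"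
    and W_def: "\<And>x. W x = measure M {\<omega> \<in> space M. L 1 \<omega> \<le> x}"
    and w_nonneg: "\<And>x. 0 \<le> w x"
    and w_pdf: "distributed M lborel (L 1) (\<lambda>x. ennreal (w x))"
    and X_int: "integrable M (X 1)"
    and delta: "\<delta> \<ge> 0"
    and t: "t > 0"
  shows "(LINT \<omega>|M. IBNR_disc tau X L \<delta> t \<omega>)
           = (LINT \<omega>|M. X 1 \<omega>) * exp (- \<delta> * t) *
             (LINT x:{0..t}|interval_measure (renewal_fun F). dickson_hipp \<delta> w (t - x))
       \<and> (LINT \<omega>|M. IBNR_disc tau X L 0 t \<omega>)
           = (LINT \<omega>|M. X 1 \<omega>) *
             (LINT x:{0..t}|interval_measure (renewal_fun F). 1 - W (t - x))"
proof -
  have I: "ibnr M tau X L F W w"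
    apply (intro ibnr.intro[OF M] ibnr_axioms.intro)
    apply (rule indep)
    apply (erule tau_id)
    apply (erule X_id)
    apply (erule L_id)
    apply (erule tau_pos)
    apply (rule F_def)
    apply (rule W_def)
    apply (rule w_nonneg)
    apply (rule w_pdf)
    apply (rule X_int)
    done
  have A: "(LINT \<omega>|M. IBNR_disc tau X L \<delta> t \<omega>)
           = (LINT \<omega>|M. X 1 \<omega>) * exp (- \<delta> * t) *
             (LINT x:{0..t}|interval_measure (renewal_fun F). dickson_hipp \<delta> w (t - x))"
    by (rule ibnr.main[OF I delta t])
  have B0: "(LINT \<omega>|M. IBNR_disc tau X L 0 t \<omega>)
           = (LINT \<omega>|M. X 1 \<omega>) * exp (- 0 * t) *
             (LINT x:{0..t}|interval_measure (renewal_fun F). dickson_hipp 0 w (t - x))"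
    by (rule ibnr.main[OF I _ t]) simp
  have D: "dickson_hipp 0 w (t - x) = 1 - W (t - x)" for x
    by (rule ibnr.dh0[OF I])
  show ?thesis using A B0 unfolding D by simp
qed


end
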